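(* Let $F$ be a field of characteristic $2$. Let $\mathcal G$ be the group with presentation $\langle y_1,y_2,\dots \mid y_i^2=1,\ ((y_i,y_j),y_k)=1\ (i,j,k\ge 1)\rangle$, where $(a,b)=a^{-1}b^{-1}ab$, and let $F\mathcal G$ be its group algebra. For $i,j\ge1$ put $d_{ij}=(y_i,y_j)+1\in F\mathcal G$, and let $I$ be the two-sided ideal of $F\mathcal G$ generated by all elements $d_{i_1i_2}d_{i_3i_4}+d_{i_1i_3}d_{i_2i_4}$ with $i_1,i_2,i_3,i_4\ge 1$. Let $\ell>0$ and let $i_1,i_2,\dots,i_{2\ell}$ be pairwise distinct positive integers. Then \[ \bigl((y_{i_1},y_{i_2})+1\bigr)\bigl((y_{i_3},y_{i_4})+1\bigr)\cdots\bigl((y_{i_{2\ell-1}},y_{i_{2\ell}})+1\bigr)\notin I. \] *)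

theory Defs
  imports Main "HOL-Library.Poly_Mapping"
begin

text \<open>Generators are indexed by nat starting at 0; the paper's y_{n+1} is our generator n.
  A letter (n, False) stands for y_n, (n, True) for its formal inverse.\<close>

type_synonym word = "(nat \<times> bool) list"

fun linv :: "nat \<times> bool \<Rightarrow> nat \<times> bool" where
  "linv (n, b) = (n, \<not> b)"

definition winv :: "word \<Rightarrow> word" where
  "winv w = rev (map linv w)"

definition wgen :: "nat \<Rightarrow> word" where
  "wgen n = [(n, False)]"

definition wcomm :: "word \<Rightarrow> word \<Rightarrow> word" where
  "wcomm a b = winv a @ winv b @ a @ b"

inductive pres_eq :: "word \<Rightarrow> word \<Rightarrow> bool" where
  refl: "pres_eq w w"
| sym: "pres_eq v w \<Longrightarrow> pres_eq w v"
| trans: "pres_eq u v \<Longrightarrow> pres_eq v w \<Longrightarrow> pres_eq u w"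
| cancel: "pres_eq (u @ [x, linv x] @ v) (u @ v)"
| rel_sq: "pres_eq (u @ wgen i @ wgen i @ v) (u @ v)"
| rel_comm: "pres_eq (u @ wcomm (wcomm (wgen i) (wgen j)) (wgen k) @ v) (u @ v)"

lemma pres_eq_equivp: "equivp pres_eq"
  by (intro equivpI reflpI sympI transpI) (auto intro: pres_eq.intros)

quotient_type grp = word / pres_eq
  by (rule pres_eq_equivp)

lemma pres_eq_append_right: "pres_eq a b \<Longrightarrow> pres_eq (a @ c) (b @ c)"
proof (induction rule: pres_eq.induct)
  case (cancel u x v) show ?case using pres_eq.cancel[of u x "v @ c"] by simp
next
  case (rel_sq u i v) show ?case using pres_eq.rel_sq[of u i "v @ c"] by simp
next
  case (rel_comm u i j k v) show ?case using pres_eq.rel_comm[of u i j k "v @ c"] by simp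
qed (auto intro: pres_eq.intros)

lemma pres_eq_append_left: "pres_eq a b \<Longrightarrow> pres_eq (c @ a) (c @ b)"
proof (induction rule: pres_eq.induct)
  case (cancel u x v) show ?case using pres_eq.cancel[of "c @ u" x v] by simp
next
  case (rel_sq u i v) show ?case using pres_eq.rel_sq[of "c @ u" i v] by simp
next
  case (rel_comm u i j k v) show ?case using pres_eq.rel_comm[of "c @ u" i j k v] by simp
qed (auto intro: pres_eq.intros)

text \<open>The group multiplication is written additively (as \<open>+\<close>), so that the
  library monoid algebra \<open>grp \<Rightarrow>\<^sub>0 'a\<close> (Poly_Mapping, convolution product) is the group algebra.\<close>
instantiation grp :: monoid_add
begin
lift_definition zero_grp :: grp is "[]" .
lift_definition plus_grp :: "grp \<Rightarrow> grp \<Rightarrow> grp" is "(@)"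
  by (meson pres_eq.trans pres_eq_append_left pres_eq_append_right)
instance by standard (transfer, simp add: pres_eq.refl)+
end

definition gen :: "nat \<Rightarrow> grp" where
  "gen n = abs_grp [(n, False)]"

definition gen_inv :: "nat \<Rightarrow> grp" where
  "gen_inv n = abs_grp [(n, True)]"

definition gcomm :: "nat \<Rightarrow> nat \<Rightarrow> grp" where
  "gcomm i j = gen_inv i + gen_inv j + gen i + gen j"

definition grp_elt :: "grp \<Rightarrow> (grp \<Rightarrow>\<^sub>0 'a::field)" where
  "grp_elt g = Poly_Mapping.single g 1"

definition dd :: "nat \<Rightarrow> nat \<Rightarrow> (grp \<Rightarrow>\<^sub>0 'a::field)" where
  "dd i j = grp_elt (gcomm i j) + 1"

inductive_set ideal_gen :: "'r::ring set \<Rightarrow> 'r set" for S where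
  base: "s \<in> S \<Longrightarrow> s \<in> ideal_gen S"
| zero: "0 \<in> ideal_gen S"
| add: "a \<in> ideal_gen S \<Longrightarrow> b \<in> ideal_gen S \<Longrightarrow> a + b \<in> ideal_gen S"
| lmult: "a \<in> ideal_gen S \<Longrightarrow> r * a \<in> ideal_gen S"
| rmult: "a \<in> ideal_gen S \<Longrightarrow> a * r \<in> ideal_gen S"

definition I_ideal :: "(grp \<Rightarrow>\<^sub>0 'a::field) set" where
  "I_ideal = ideal_gen {dd i1 i2 * dd i3 i4 + dd i1 i3 * dd i2 i4 | i1 i2 i3 i4. True}"

end

theory Submission
  imports Defs
begin

type_synonym st = "(nat \<Rightarrow> bool) \<times> (nat \<Rightarrow> nat \<Rightarrow> bool)"

fun step :: "nat \<Rightarrow> st \<Rightarrow> st" where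
  "step n (s, c) = (s(n := \<not> s n), \<lambda>i j. c i j \<noteq> (j = n \<and> s i \<and> n < i))"

fun toggle :: "nat \<Rightarrow> nat \<Rightarrow> st \<Rightarrow> st" where
  "toggle a b (s, c) = (s, \<lambda>i j. c i j \<noteq> (a \<noteq> b \<and> i = max a b \<and> j = min a b))"

definition run :: "word \<Rightarrow> st \<Rightarrow> st" where
  "run w st = foldl (\<lambda>st x. step (fst x) st) st w"

lemma run_Nil[simp]: "run [] st = st" by (simp add: run_def)
lemma run_Cons[simp]: "run (x # w) st = run w (step (fst x) st)" by (simp add: run_def)
lemma run_append[simp]: "run (v @ w) st = run w (run v st)" by (simp add: run_def)

lemma step_step[simp]: "step n (step n st) = st"
  by (cases st) (auto simp: fun_eq_iff)

lemma step_toggle[simp]: "step n (toggle a b st) = toggle a b (step n st)"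
  by (cases st) (auto simp: fun_eq_iff)

lemma toggle_toggle[simp]: "toggle a b (toggle a b st) = st"
  by (cases st) (auto simp: fun_eq_iff)

lemma run_toggle: "run w (toggle a b st) = toggle a b (run w st)"
  by (induction w arbitrary: st) auto

lemma fst_toggle[simp]: "fst (toggle a b st) = fst st"
  by (cases st) simp

lemma toggle_sym: "toggle b a st = toggle a b st"
  by (cases st) (auto simp: fun_eq_iff max_def min_def)

lemma step4: "step b (step a (step b (step a st))) = toggle a b st"
  by (cases st) (auto simp: fun_eq_iff max_def min_def)

lemma run_winv_fst: "map fst (winv w) = rev (map fst w)"
  by (induction w) (auto simp: winv_def)

lemma run_via_fst: "map fst v = map fst w \<Longrightarrow> run v st = run w st"
proof (induction v arbitrary: w st)
  case Nil thus ?case by simp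
next
  case (Cons x v)
  then obtain y w' where "w = y # w'" "fst x = fst y" "map fst v = map fst w'" by (cases w) auto
  thus ?case using Cons.IH by simp
qed

lemma run_comm: "run (wcomm (wcomm (wgen i) (wgen j)) (wgen k)) st = st"
proof -
  have "map fst (wcomm (wcomm (wgen i) (wgen j)) (wgen k)) = [j,i,j,i,k,i,j,i,j,k]"
    by (simp add: wcomm_def winv_def wgen_def)
  hence "run (wcomm (wcomm (wgen i) (wgen j)) (wgen k)) st = run (map (\<lambda>n. (n,False)) [j,i,j,i,k,i,j,i,j,k]) st"
    by (intro run_via_fst) simp
  also have "\<dots> = st" by (simp add: step4 step4[of j i] toggle_sym[of j i])
  finally show ?thesis .
qed

lemma pres_eq_run: "pres_eq v w \<Longrightarrow> run v st = run w st"
proof (induction v w arbitrary: st rule: pres_eq.induct)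
  case (cancel u x v) thus ?case by (cases x) simp
next
  case (rel_sq u i v) thus ?case by (simp add: wgen_def)
next
  case (rel_comm u i j k v) thus ?case by (simp add: run_comm)
qed auto

lift_definition grun :: "grp \<Rightarrow> st \<Rightarrow> st" is run
  using pres_eq_run by blast

lemma grun_plus: "grun (x + y) st = grun y (grun x st)"
  by transfer simp

lemma grun_zero: "grun 0 st = st" by transfer simp

lemma grun_gen: "grun (gen n) st = step n st"
  by (simp add: gen_def grun.abs_eq)
lemma grun_gen_inv: "grun (gen_inv n) st = step n st"
  by (simp add: gen_inv_def grun.abs_eq)

lemma grun_gcomm: "grun (gcomm a b) st = toggle a b st"
  by (simp add: gcomm_def grun_plus grun_gen grun_gen_inv step4)

lemma grun_toggle: "grun g (toggle a b st) = toggle a b (grun g st)"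
  by transfer (rule run_toggle)

definition init :: st where "init = (\<lambda>_. False, \<lambda>_ _. False)"

type_synonym 'a R = "(nat \<Rightarrow>\<^sub>0 nat) \<Rightarrow>\<^sub>0 'a"

definition X :: "nat \<Rightarrow> 'a::field R" where
  "X i = Poly_Mapping.single (Poly_Mapping.single i 1) 1"

definition sqf :: "(nat \<Rightarrow>\<^sub>0 nat) \<Rightarrow> bool" where
  "sqf m = (\<forall>i. Poly_Mapping.lookup m i \<le> 1)"

definition eqJ :: "'a::field R \<Rightarrow> 'a R \<Rightarrow> bool" where
  "eqJ p q = (\<forall>m. sqf m \<longrightarrow> Poly_Mapping.lookup p m = Poly_Mapping.lookup q m)"

lemma eqJ_refl[simp]: "eqJ p p" by (simp add: eqJ_def)
lemma eqJ_sym: "eqJ p q \<Longrightarrow> eqJ q p" by (simp add: eqJ_def)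
lemma eqJ_trans: "eqJ p q \<Longrightarrow> eqJ q r \<Longrightarrow> eqJ p r" by (simp add: eqJ_def)
lemma eqJ_add: "eqJ p q \<Longrightarrow> eqJ p' q' \<Longrightarrow> eqJ (p + p') (q + q')"
  by (simp add: eqJ_def lookup_add)

lemma sqf_le: "m = l + q \<Longrightarrow> sqf m \<Longrightarrow> sqf l"
  unfolding sqf_def by (metis le_add1 le_trans lookup_add)

lemma eqJ_mult: "eqJ p q \<Longrightarrow> eqJ (p * r) (q * r)"
  unfolding eqJ_def
proof (intro allI impI)
  fix m assume H: "\<forall>m. sqf m \<longrightarrow> Poly_Mapping.lookup p m = Poly_Mapping.lookup q m" and m: "sqf m"
  have "Poly_Mapping.lookup p l * (\<Sum>qq. Poly_Mapping.lookup r qq when m = l + qq) = Poly_Mapping.lookup q l * (\<Sum>qq. Poly_Mapping.lookup r qq when m = l + qq)" for l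
  proof (cases "\<exists>qq. m = l + qq")
    case True
    then obtain qq where "m = l + qq" by blast
    with m H have "Poly_Mapping.lookup p l = Poly_Mapping.lookup q l" using sqf_le by blast
    thus ?thesis by simp
  next
    case False
    hence "(\<Sum>qq. Poly_Mapping.lookup r qq when m = l + qq) = 0" by simp
    thus ?thesis by simp
  qed
  thus "Poly_Mapping.lookup (p * r) m = Poly_Mapping.lookup (q * r) m"
    by (simp only: lookup_mult)
qed

lemma eqJ_mult_left: "eqJ p q \<Longrightarrow> eqJ (r * p) (r * q)"
  using eqJ_mult[of p q r] by (simp add: mult.commute)

lemma eqJ_single_nsqf: "\<not> sqf k \<Longrightarrow> eqJ (Poly_Mapping.single k c) 0"
  by (auto simp: eqJ_def lookup_single when_def)

lemma char2: "CHAR('a::field) = 2 \<Longrightarrow> (x::'a) + x = 0"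
proof -
  assume "CHAR('a) = 2"
  hence "(of_nat 2 :: 'a) = 0" by (metis of_nat_CHAR)
  hence z: "(2::'a) = 0" by simp
  have "x + x = 2 * x" by (rule mult_2[symmetric])
  thus ?thesis by (simp only: z mult_zero_left)
qed

lemma char2R: assumes "CHAR('a::field) = 2" shows "(p::'a R) + p = 0"
  by (rule poly_mapping_eqI) (simp only: lookup_add lookup_zero char2[OF assms])

definition mT :: "nat set \<Rightarrow> (nat \<Rightarrow>\<^sub>0 nat)" where
  "mT T = (\<Sum>i\<in>T. Poly_Mapping.single i 1)"

lemma sqf_mT: "finite T \<Longrightarrow> sqf (mT T)"
  by (simp add: sqf_def mT_def lookup_sum lookup_single when_def)

definition tau :: "nat set \<Rightarrow> 'a::field R \<Rightarrow> 'a" where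
  "tau T p = Poly_Mapping.lookup p (mT T)"

lemma tau_eqJ: "finite T \<Longrightarrow> eqJ p q \<Longrightarrow> tau T p = tau T q"
  by (simp add: tau_def eqJ_def sqf_mT)

lemma tau_add: "tau T (p + q) = tau T p + tau T q"
  by (simp add: tau_def lookup_add)

definition uu :: "nat set \<Rightarrow> nat \<Rightarrow> nat \<Rightarrow> 'a::field R" where
  "uu T a b = (if a \<in> T \<and> b \<in> T \<and> a \<noteq> b then X a * X b else 0)"

definition theta :: "nat set \<Rightarrow> (nat \<Rightarrow> nat \<Rightarrow> bool) \<Rightarrow> 'a::field R" where
  "theta T c = (\<Prod>p \<in> {(i,j). i \<in> T \<and> j \<in> T \<and> j < i \<and> c i j}. 1 + X (fst p) * X (snd p))"

lemma XX: "X a * X b = Poly_Mapping.single (Poly_Mapping.single a 1 + Poly_Mapping.single b 1) 1"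
  by (simp add: X_def mult_single)

lemma sq_gen: "(1 + u) * (1 + u) = (1::'a::comm_ring_1) + (u + u) + u * u"
  by (simp add: algebra_simps)

lemma sq_eqJ: "CHAR('a::field) = 2 \<Longrightarrow> eqJ ((1 + X a * X b) * (1 + X a * X b) :: 'a R) 1"
proof -
  assume c: "CHAR('a) = 2"
  have "\<not> sqf (Poly_Mapping.single a 1 + Poly_Mapping.single b 1 + (Poly_Mapping.single a 1 + Poly_Mapping.single b 1))"
    unfolding sqf_def by (auto simp: lookup_add lookup_single when_def intro!: exI[of _ a])
  hence "eqJ ((X a * X b) * (X a * X b) :: 'a R) 0"
    by (simp add: XX mult_single eqJ_single_nsqf)
  hence "eqJ ((1::'a R) + (X a * X b + X a * X b) + (X a * X b) * (X a * X b)) (1 + 0 + 0)"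
    by (intro eqJ_add) (auto simp: char2R[OF c])
  thus ?thesis by (simp only: sq_gen) simp
qed


abbreviation e1 :: "nat \<Rightarrow> nat \<Rightarrow>\<^sub>0 nat" where "e1 i \<equiv> Poly_Mapping.single i 1"

lemma nsqf4: "\<not> distinct [a,b,c,d] \<Longrightarrow> \<not> sqf (e1 a + e1 b + (e1 c + e1 d))"
  unfolding sqf_def
  by (auto simp: lookup_add lookup_single when_def)

lemma uu_sum:
  assumes c: "CHAR('a::field) = 2"
  shows "eqJ (uu T a1 a2 * uu T a3 a4 + uu T a1 a3 * uu T a2 a4 :: 'a R) 0"
proof -
  have k: "e1 a1 + e1 a3 + (e1 a2 + e1 a4) = e1 a1 + e1 a2 + (e1 a3 + e1 a4)"
    by (simp add: ac_simps)
  consider "a1 \<in> T \<and> a2 \<in> T \<and> a3 \<in> T \<and> a4 \<in> T \<and> distinct [a1,a2,a3,a4]"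
    | "\<not> (a1 \<in> T \<and> a2 \<in> T \<and> a3 \<in> T \<and> a4 \<in> T)"
    | "a1 \<in> T \<and> a2 \<in> T \<and> a3 \<in> T \<and> a4 \<in> T \<and> \<not> distinct [a1,a2,a3,a4]" by blast
  thus ?thesis
  proof cases
    case 1
    have h1: "uu T a1 a2 * uu T a3 a4 = (Poly_Mapping.single (e1 a1 + e1 a2 + (e1 a3 + e1 a4)) 1 :: 'a R)"
      using 1 by (simp add: uu_def XX mult_single)
    have h2: "uu T a1 a3 * uu T a2 a4 = (Poly_Mapping.single (e1 a1 + e1 a3 + (e1 a2 + e1 a4)) 1 :: 'a R)"
      using 1 by (simp add: uu_def XX mult_single)
    have "uu T a1 a2 * uu T a3 a4 + uu T a1 a3 * uu T a2 a4 = (0 :: 'a R)"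
      unfolding h1 h2 k by (rule char2R[OF c])
    thus ?thesis by simp
  next
    case 2
    have z: "\<And>a b. a \<notin> T \<or> b \<notin> T \<Longrightarrow> uu T a b = (0::'a R)" by (auto simp: uu_def)
    have "uu T a1 a2 * uu T a3 a4 = (0 :: 'a R)" "uu T a1 a3 * uu T a2 a4 = (0 :: 'a R)"
      using 2 z[of a1 a2] z[of a3 a4] z[of a1 a3] z[of a2 a4] by (metis mult_zero_left mult_zero_right)+
    hence "uu T a1 a2 * uu T a3 a4 + uu T a1 a3 * uu T a2 a4 = (0 :: 'a R)" by (simp only: add_0_left)
    thus ?thesis by simp
  next
    case 3
    have n1: "\<not> sqf (e1 a1 + e1 a2 + (e1 a3 + e1 a4))" using 3 nsqf4 by blast
    have n2: "\<not> sqf (e1 a1 + e1 a3 + (e1 a2 + e1 a4))" using n1 k by simp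
    have "eqJ (uu T a1 a2 * uu T a3 a4 :: 'a R) 0"
      using n1 by (simp add: uu_def XX mult_single eqJ_single_nsqf)
    moreover have "eqJ (uu T a1 a3 * uu T a2 a4 :: 'a R) 0"
      using n2 by (simp add: uu_def XX mult_single eqJ_single_nsqf)
    ultimately show ?thesis using eqJ_add by fastforce
  qed
qed

definition Pset :: "nat set \<Rightarrow> (nat \<Rightarrow> nat \<Rightarrow> bool) \<Rightarrow> (nat \<times> nat) set" where
  "Pset T c = {(i,j). i \<in> T \<and> j \<in> T \<and> j < i \<and> c i j}"

lemma finite_Pset: "finite T \<Longrightarrow> finite (Pset T c)"
  by (rule finite_subset[of _ "T \<times> T"]) (auto simp: Pset_def)

lemma theta_Pset: "theta T c = (\<Prod>p \<in> Pset T c. 1 + X (fst p) * X (snd p))"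
  by (simp add: theta_def Pset_def)

lemma theta_toggle:
  assumes fin: "finite T" and ch: "CHAR('a::field) = 2"
  shows "eqJ (theta T (snd (toggle a b st)) :: 'a R) (theta T (snd st) * (1 + uu T a b))"
proof -
  obtain s c where st: "st = (s, c)" by (cases st)
  define c' where "c' = (\<lambda>i j. c i j \<noteq> (a \<noteq> b \<and> i = max a b \<and> j = min a b))"
  have tg: "snd (toggle a b st) = c'" by (simp add: st c'_def)
  define f :: "nat \<times> nat \<Rightarrow> 'a R" where "f p = 1 + X (fst p) * X (snd p)" for p
  show ?thesis
  proof (cases "a \<noteq> b \<and> a \<in> T \<and> b \<in> T")
    case False
    hence "Pset T c' = Pset T c" by (auto simp: Pset_def c'_def max_def min_def split: if_splits)
    moreover have "uu T a b = (0 :: 'a R)" using False by (auto simp: uu_def)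
    ultimately show ?thesis unfolding tg by (simp add: st theta_Pset)
  next
    case True
    define p0 where "p0 = (max a b, min a b)"
    have u: "uu T a b = (f p0 - 1 :: 'a R)" using True
      by (auto simp: uu_def f_def p0_def max_def min_def mult.commute)
    have p0T: "fst p0 \<in> T" "snd p0 \<in> T" "snd p0 < fst p0" using True
      by (auto simp: p0_def max_def min_def)
    show ?thesis
    proof (cases "c (fst p0) (snd p0)")
      case False
      have "Pset T c' = insert p0 (Pset T c)" "p0 \<notin> Pset T c"
        using False p0T True by (auto simp: Pset_def c'_def p0_def split: prod.splits)
      hence "theta T c' = (f p0 * theta T c :: 'a R)"
        by (simp add: theta_Pset finite_Pset[OF fin] f_def)
      thus ?thesis unfolding tg by (simp add: st u mult.commute)
    next
      case Tr: True
      have "Pset T c = insert p0 (Pset T c')" "p0 \<notin> Pset T c'"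
        using Tr p0T True by (auto simp: Pset_def c'_def p0_def split: prod.splits)
      hence th: "theta T c = (f p0 * theta T c' :: 'a R)"
        by (simp add: theta_Pset finite_Pset[OF fin] f_def)
      have "eqJ (f p0 * f p0 :: 'a R) 1" unfolding f_def by (rule sq_eqJ[OF ch])
      hence "eqJ (theta T c' * (f p0 * f p0) :: 'a R) (theta T c' * 1)" by (rule eqJ_mult_left)
      hence "eqJ (theta T c * (1 + uu T a b) :: 'a R) (theta T c')"
        by (simp add: th u ac_simps)
      hence "eqJ (theta T c') (theta T c * (1 + uu T a b) :: 'a R)" by (rule eqJ_sym)
      thus ?thesis unfolding tg by (simp only: st snd_conv)
    qed
  qed
qed


section \<open>The functional\<close>

definition LamS :: "nat set \<Rightarrow> st \<Rightarrow> 'a::field R \<Rightarrow> 'a" where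
  "LamS T st r = (if fst st = (\<lambda>_. False) then tau T (theta T (snd st) * r) else 0)"

definition Lam :: "nat set \<Rightarrow> grp \<Rightarrow> 'a::field" where
  "Lam T g = LamS T (grun g init) 1"

definition lam :: "nat set \<Rightarrow> (grp \<Rightarrow>\<^sub>0 'a::field) \<Rightarrow> 'a" where
  "lam T p = (\<Sum>g\<in>Poly_Mapping.keys p. Poly_Mapping.lookup p g * Lam T g)"

lemma lam_superset: "finite K \<Longrightarrow> Poly_Mapping.keys p \<subseteq> K \<Longrightarrow>
   lam T p = (\<Sum>g\<in>K. Poly_Mapping.lookup p g * Lam T g)"
  unfolding lam_def by (rule sum.mono_neutral_left) (auto simp: in_keys_iff)

lemma lam_add: "lam T (p + q) = lam T p + lam T q"
proof -
  let ?K = "Poly_Mapping.keys p \<union> Poly_Mapping.keys q"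
  have f: "finite ?K" by simp
  have "Poly_Mapping.keys (p + q) \<subseteq> ?K" by (auto simp: in_keys_iff lookup_add)
  hence "lam T (p + q) = (\<Sum>g\<in>?K. Poly_Mapping.lookup (p+q) g * Lam T g)" by (rule lam_superset[OF f])
  also have "\<dots> = (\<Sum>g\<in>?K. Poly_Mapping.lookup p g * Lam T g) + (\<Sum>g\<in>?K. Poly_Mapping.lookup q g * Lam T g)"
    by (simp add: lookup_add ring_distribs sum.distrib)
  also have "\<dots> = lam T p + lam T q"
    by (subst (1 2) lam_superset[OF f]) auto
  finally show ?thesis .
qed

lemma lam_zero[simp]: "lam T 0 = 0" by (simp add: lam_def)

lemma lookup_single0_left: "Poly_Mapping.lookup (Poly_Mapping.single 0 b * p) g = b * Poly_Mapping.lookup p g"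
  by (simp add: mult_map_scale_conv_mult[symmetric] map.rep_eq when_def)

lemma lookup_single0_right: "Poly_Mapping.lookup (p * Poly_Mapping.single 0 b) g = Poly_Mapping.lookup p g * (b::'b::comm_semiring_1)"
proof -
  have i: "(\<Sum>q. (b when 0 = q) when g = l + q) = (b when g = l)" for l
    by (subst when_commute) simp
  have "Poly_Mapping.lookup (p * Poly_Mapping.single 0 b) g = (\<Sum>l. Poly_Mapping.lookup p l * (b when g = l))"
    by (simp only: lookup_mult lookup_single i)
  also have "\<dots> = Poly_Mapping.lookup p g * b" by (simp add: mult_when)
  finally show ?thesis .
qed

lemma lam_scal_left: "lam T (Poly_Mapping.single 0 b * p) = b * lam T p"
proof -
  have "Poly_Mapping.keys (Poly_Mapping.single 0 b * p) \<subseteq> Poly_Mapping.keys p"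
    by (auto simp: in_keys_iff lookup_single0_left)
  hence "lam T (Poly_Mapping.single 0 b * p) = (\<Sum>g\<in>Poly_Mapping.keys p. Poly_Mapping.lookup (Poly_Mapping.single 0 b * p) g * Lam T g)"
    by (intro lam_superset) auto
  thus ?thesis by (simp add: lookup_single0_left lam_def sum_distrib_left mult.assoc)
qed

lemma lam_scal_right: "lam T (p * Poly_Mapping.single 0 b) = b * lam T p"
proof -
  have "Poly_Mapping.keys (p * Poly_Mapping.single 0 b) \<subseteq> Poly_Mapping.keys p"
    by (auto simp: in_keys_iff lookup_single0_right)
  hence "lam T (p * Poly_Mapping.single 0 b) = (\<Sum>g\<in>Poly_Mapping.keys p. Poly_Mapping.lookup (p * Poly_Mapping.single 0 b) g * Lam T g)"
    by (intro lam_superset) auto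
  thus ?thesis by (simp add: lookup_single0_right lam_def sum_distrib_left ac_simps)
qed

lemma update_eq: "a \<notin> Poly_Mapping.keys f \<Longrightarrow> Poly_Mapping.update a b f = Poly_Mapping.single a b + f"
  by (rule poly_mapping_eqI) (auto simp: lookup_update lookup_add lookup_single when_def in_keys_iff)

lemma left_decomp:
  assumes "\<And>g. lam T (grp_elt g * y) = 0"
  shows "lam T (r * y) = 0"
proof (induction r rule: update_induct)
  case const thus ?case by simp
next
  case (update f a b)
  have "Poly_Mapping.single a b = Poly_Mapping.single 0 b * grp_elt a"
    by (simp add: grp_elt_def mult_single)
  hence "Poly_Mapping.update a b f * y = Poly_Mapping.single 0 b * (grp_elt a * y) + f * y"
    using update.hyps by (simp add: update_eq distrib_right mult.assoc)
  thus ?case using update.IH assms by (simp add: lam_add lam_scal_left)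
qed

lemma right_decomp:
  assumes "\<And>g. lam T (y * grp_elt g) = 0"
  shows "lam T (y * r) = 0"
proof (induction r rule: update_induct)
  case const thus ?case by simp
next
  case (update f a b)
  have "Poly_Mapping.single a b = grp_elt a * Poly_Mapping.single 0 b"
    by (simp add: grp_elt_def mult_single)
  hence "y * Poly_Mapping.update a b f = (y * grp_elt a) * Poly_Mapping.single 0 b + y * f"
    using update.hyps by (simp add: update_eq distrib_left mult.assoc)
  thus ?case using update.IH assms by (simp add: lam_add lam_scal_right)
qed

lemma grp_elt_mult: "grp_elt a * grp_elt b = (grp_elt (a + b) :: grp \<Rightarrow>\<^sub>0 'a::field)"
  by (simp add: grp_elt_def mult_single)

lemma grp_elt_zero: "grp_elt 0 = (1 :: grp \<Rightarrow>\<^sub>0 'a::field)"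
  by (simp add: grp_elt_def)

lemma lam_grp_elt: "lam T (grp_elt g :: grp \<Rightarrow>\<^sub>0 'a::field) = Lam T g"
  by (simp add: lam_def grp_elt_def)

lemma lam_prod:
  assumes fin: "finite T" and ch: "CHAR('a::field) = 2"
  shows "lam T (grp_elt k * prod_list (map (\<lambda>(a,b). dd a b) L) * grp_elt h :: grp \<Rightarrow>\<^sub>0 'a)
     = LamS T (grun (k + h) init) (prod_list (map (\<lambda>(a,b). uu T a b) L))"
proof (induction L arbitrary: k)
  case Nil thus ?case by (simp add: grp_elt_mult lam_grp_elt Lam_def)
next
  case (Cons p L)
  obtain a b where p: "p = (a, b)" by (cases p)
  let ?R = "prod_list (map (\<lambda>(a,b). dd a b) L) :: grp \<Rightarrow>\<^sub>0 'a"
  let ?U = "prod_list (map (\<lambda>(a,b). uu T a b) L) :: 'a R"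
  have e: "grp_elt k * prod_list (map (\<lambda>(a,b). dd a b) (p # L)) * grp_elt h
     = grp_elt (k + gcomm a b) * ?R * grp_elt h + grp_elt k * ?R * grp_elt h"
    by (simp add: p dd_def distrib_left distrib_right mult.assoc[symmetric] grp_elt_mult)
  have g: "grun (k + gcomm a b + h) init = toggle a b (grun (k + h) init)"
    by (simp add: grun_plus grun_gcomm grun_toggle)
  obtain s c where st: "grun (k + h) init = (s, c)" by (cases "grun (k + h) init")
  have ft: "fst (toggle a b (s, c)) = s" by simp
  have sum: "LamS T (toggle a b (s,c)) ?U + LamS T (s,c) ?U = LamS T (s,c) (uu T a b * ?U)"
  proof (cases "s = (\<lambda>_. False)")
    case False thus ?thesis by (simp add: LamS_def)
  next
    case True
    have "eqJ (theta T (snd (toggle a b (s,c))) * ?U) (theta T c * (1 + uu T a b) * ?U)"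
      using theta_toggle[OF fin ch, of a b "(s,c)"] by (simp add: eqJ_mult)
    hence "tau T (theta T (snd (toggle a b (s,c))) * ?U) = tau T (theta T c * (1 + uu T a b) * ?U)"
      by (rule tau_eqJ[OF fin])
    moreover have "theta T c * (1 + uu T a b) * ?U + theta T c * ?U
        = theta T c * (uu T a b * ?U) + (theta T c * ?U + theta T c * ?U)"
      by (simp add: algebra_simps)
    ultimately show ?thesis using True
      by (simp add: LamS_def tau_add[symmetric] char2R[OF ch] del: toggle.simps)
  qed
  show ?case
    unfolding e lam_add Cons.IH g[unfolded st] st[symmetric] using sum st
    by (simp add: p del: toggle.simps)
qed


lemma lam_gen:
  assumes fin: "finite T" and ch: "CHAR('a::field) = 2"
  shows "lam T (grp_elt g * (dd a1 a2 * dd a3 a4 + dd a1 a3 * dd a2 a4) * grp_elt h :: grp \<Rightarrow>\<^sub>0 'a) = 0"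
proof -
  have e: "grp_elt g * (dd a1 a2 * dd a3 a4 + dd a1 a3 * dd a2 a4) * grp_elt h
    = grp_elt g * prod_list (map (\<lambda>(a,b). dd a b) [(a1,a2),(a3,a4)]) * grp_elt h
      + grp_elt g * prod_list (map (\<lambda>(a,b). dd a b) [(a1,a3),(a2,a4)]) * grp_elt h"
    by (simp add: distrib_left distrib_right)
  obtain s c where st: "grun (g + h) init = (s, c)" by (cases "grun (g + h) init")
  have "eqJ (theta T c * (uu T a1 a2 * uu T a3 a4 + uu T a1 a3 * uu T a2 a4) :: 'a R) (theta T c * 0)"
    by (rule eqJ_mult_left[OF uu_sum[OF ch]])
  hence "tau T (theta T c * (uu T a1 a2 * uu T a3 a4 + uu T a1 a3 * uu T a2 a4) :: 'a R) = tau T (0 :: 'a R)"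
    using tau_eqJ[OF fin] by simp
  thus ?thesis
    unfolding e lam_add lam_prod[OF fin ch] st
    by (simp add: LamS_def distrib_left tau_def lookup_add)
qed

lemma lam_ideal:
  assumes fin: "finite T" and ch: "CHAR('a::field) = 2"
  assumes "x \<in> (I_ideal :: (grp \<Rightarrow>\<^sub>0 'a) set)"
  shows "lam T (r * x * t) = 0"
  using assms(3) unfolding I_ideal_def
proof (induction x arbitrary: r t rule: ideal_gen.induct)
  case (base s)
  then obtain a1 a2 a3 a4 where s: "s = dd a1 a2 * dd a3 a4 + dd a1 a3 * dd a2 a4" by blast
  have "lam T (r * s * grp_elt h) = 0" for h
  proof -
    have "lam T (r * (s * grp_elt h)) = 0"
      by (rule left_decomp) (simp add: s mult.assoc[symmetric] lam_gen[OF fin ch])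
    thus ?thesis by (simp add: mult.assoc)
  qed
  thus ?case by (rule right_decomp)
next
  case zero thus ?case by simp
next
  case (add a b) thus ?case by (simp add: distrib_left distrib_right lam_add)
next
  case (lmult a r') thus ?case using lmult.IH[of "r * r'" t] by (simp add: mult.assoc)
next
  case (rmult a r') thus ?case using rmult.IH[of r "r' * t"] by (simp add: mult.assoc)
qed

lemma prod_uu:
  assumes inj: "inj_on idx {1..2*l}" and "n \<le> l"
  shows "prod_list (map (\<lambda>m. uu (idx ` {1..2*l}) (idx (2*m - 1)) (idx (2*m))) [1..<Suc n])
     = (Poly_Mapping.single (\<Sum>i\<in>{1..2*n}. e1 (idx i)) 1 :: 'a::field R)"
  using assms(2)
proof (induction n)
  case 0 thus ?case by simp
next
  case (Suc n)
  let ?T = "idx ` {1..2*l}"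
  have a: "idx (Suc (2*n)) \<in> ?T" "idx (Suc (Suc (2*n))) \<in> ?T" using Suc.prems by auto
  have b: "idx (Suc (2*n)) \<noteq> idx (Suc (Suc (2*n)))"
    using Suc.prems inj_onD[OF inj, of "Suc (2*n)" "Suc (Suc (2*n))"] by auto
  have u: "uu ?T (idx (2 * Suc n - 1)) (idx (2 * Suc n))
      = (Poly_Mapping.single (e1 (idx (Suc (2*n))) + e1 (idx (Suc (Suc (2*n))))) 1 :: 'a R)"
    using a b by (simp add: uu_def XX)
  have s: "(\<Sum>i\<in>{1..2*Suc n}. e1 (idx i)) = (\<Sum>i\<in>{1..2*n}. e1 (idx i)) + (e1 (idx (Suc (2*n))) + e1 (idx (Suc (Suc (2*n)))))"
    by (simp add: sum.cl_ivl_Suc add.assoc)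
  define f where "f = (\<lambda>m. uu ?T (idx (2*m - 1)) (idx (2*m)) :: 'a R)"
  have IH: "prod_list (map f [1..<Suc n]) = Poly_Mapping.single (\<Sum>i\<in>{1..2*n}. e1 (idx i)) 1"
    using Suc.IH[OF Suc_leD[OF Suc.prems]] unfolding f_def .
  have sp: "[1..<Suc (Suc n)] = [1..<Suc n] @ [Suc n]" by simp
  have "prod_list (map f [1..<Suc (Suc n)]) = prod_list (map f [1..<Suc n]) * f (Suc n)"
    by (simp only: sp map_append prod_list.append) simp
  also have "\<dots> = Poly_Mapping.single (\<Sum>i\<in>{1..2*Suc n}. e1 (idx i)) 1"
    unfolding IH unfolding f_def using u by (simp only: mult_single s) simp
  finally show ?case by (simp only: f_def)
qed


theorem corollary2p7:
  fixes l :: nat and idx :: "nat \<Rightarrow> nat"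
  assumes "CHAR('a::field) = 2"
    and "l > 0"
    and "inj_on idx {1..2*l}"
  shows "prod_list (map (\<lambda>m. dd (idx (2*m - 1)) (idx (2*m))) [1..<Suc l])
           \<notin> (I_ideal :: (grp \<Rightarrow>\<^sub>0 'a) set)"
proof
  let ?T = "idx ` {1..2*l}"
  let ?L = "map (\<lambda>m. (idx (2*m - 1), idx (2*m))) [1..<Suc l]"
  have fin: "finite ?T" by simp
  let ?P = "prod_list (map (\<lambda>m. dd (idx (2*m - 1)) (idx (2*m))) [1..<Suc l]) :: grp \<Rightarrow>\<^sub>0 'a"
  have P: "?P = prod_list (map (\<lambda>(a,b). dd a b) ?L)" by (simp add: comp_def)
  assume "?P \<in> I_ideal"
  hence "lam ?T (grp_elt 0 * ?P * grp_elt 0) = 0"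
    using lam_ideal[OF fin assms(1)] by blast
  also have "lam ?T (grp_elt 0 * ?P * grp_elt 0) = LamS ?T (grun (0 + 0) init) (prod_list (map (\<lambda>(a,b). uu ?T a b) ?L))"
    unfolding P by (rule lam_prod[OF fin assms(1)])
  also have "prod_list (map (\<lambda>(a,b). uu ?T a b) ?L)
      = (Poly_Mapping.single (\<Sum>i\<in>{1..2*l}. e1 (idx i)) 1 :: 'a R)"
    using prod_uu[OF assms(3) order_refl] by (simp add: comp_def)
  also have "(\<Sum>i\<in>{1..2*l}. e1 (idx i)) = mT ?T"
    unfolding mT_def sum.reindex[OF assms(3)] comp_def ..
  also have "theta ?T (\<lambda>_ _. False) = (1 :: 'a R)" by (simp add: theta_def)
  hence "LamS ?T (grun (0 + 0) init) (Poly_Mapping.single (mT ?T) 1) = (1::'a)"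
    by (simp add: grun_zero LamS_def init_def tau_def)
  finally show False by simp
qed

end
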